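(* Let $\mathcal{T}_2$ be the set of $s\in\mathcal{A}^*$ with $|s|\ne\mathsf{rmin}(s)+1$ and $\mathrm{sebr}(s)=0$. For every $n$ there is a bijection $$f_2:\mathcal{T}_2\cap\mathcal{A}_n\to\{(i,s^* ):s^*\in\mathcal{A}^*\cap\mathcal{A}_{n-1},\ \mathsf{rpos}(s^* )\le i<\mathsf{rmin}(s^* )\}$$ of the form $f_2(s)=(\mathsf{rpos}(s),s^* )$ with $\mathsf{asc}(s)=\mathsf{asc}(s^* )$, $\mathsf{max}(s)=\mathsf{max}(s^* )$, $\mathsf{ealm}(s)=\mathsf{ealm}(s^* )$, $\mathsf{rmin}(s)=\mathsf{rmin}(s^* )$, $\mathsf{zero}(s)=\mathsf{zero}(s^* )+\chi(\mathsf{rpos}(s)=0)$ and $\mathsf{rep}(s)=\mathsf{rep}(s^* )+1$.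
   Context: For a sequence $s$, $\mathsf{asc}(s)=|\{i:s_i<s_{i+1}\}|$. An ascent sequence is a sequence $s=(s_1,\dots,s_n)$ of non-negative integers with $s_1=0$, $s_i\le\mathsf{asc}(s_1,\dots,s_{i-1})+1$ for $i\ge2$; $\mathcal{A}_n$ is the set of those of length $n$, $|s|$ the length; $\mathcal{A}^*$ is the set of all ascent sequences except those of the form $(0,1,\dots,|s|-1)$. $\mathsf{rep}(s)=|s|-|\{s_i\}|$; $\mathsf{zero}(s)=|\{i:s_i=0\}|$; $\mathsf{max}(s)=|\{i:s_i=i-1\}|$; $\mathsf{ealm}(s)=s_{\mathsf{max}(s)+1}$ if $\mathsf{max}(s)\ne|s|$, else $0$. A right-to-left minimum is an entry $s_i$ with $s_i<s_j$ for all $j>i$; $\mathsf{rmin}(s)$ is their number; they are indexed $0,\dots,\mathsf{rmin}(s)-1$ from left to right, with values $\mathrm{Rmin}(s)_m$ and positions $\mathrm{Prm}(s)_m$. $\mathsf{rpos}(s)$: $0$ if $\mathsf{rmin}(s)=|s|$; otherwise the maximal $m$ such that the value $\mathrm{Rmin}(s)_m$ occurs at least twice after position $\mathrm{Prm}(s)_{m-1}$ (for $m=0$: at least twice in $s$), and $0$ if none. $\mathrm{sebr}(s)$ is the smallest entry strictly between the two rightmost occurrences of $\mathrm{Rmin}(s)_{\mathsf{rpos}(s)}$, and $0$ if they are adjacent. $\chi(P)=1$ if $P$ holds, else $0$. *)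

theory Defs
  imports Main
begin

text \<open>Sequences are lists of naturals, 0-indexed: the paper's s_i is s ! (i-1).\<close>

definition asc :: "nat list \<Rightarrow> nat" where
  "asc s = card {i. Suc i < length s \<and> s ! i < s ! Suc i}"

definition is_ascent :: "nat list \<Rightarrow> bool" where
  "is_ascent s \<longleftrightarrow> s \<noteq> [] \<and> s ! 0 = 0 \<and>
     (\<forall>i. 1 \<le> i \<and> i < length s \<longrightarrow> s ! i \<le> asc (take i s) + 1)"

definition A :: "nat \<Rightarrow> nat list set" where
  "A n = {s. is_ascent s \<and> length s = n}"

definition Astar :: "nat list set" where
  "Astar = {s. is_ascent s \<and> s \<noteq> [0..<length s]}"

definition rep :: "nat list \<Rightarrow> nat" where
  "rep s = length s - card (set s)"

definition zero :: "nat list \<Rightarrow> nat" where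
  "zero s = card {i. i < length s \<and> s ! i = 0}"

definition maxs :: "nat list \<Rightarrow> nat" where
  "maxs s = card {i. i < length s \<and> s ! i = i}"

definition ealm :: "nat list \<Rightarrow> nat" where
  "ealm s = (if maxs s \<noteq> length s then s ! maxs s else 0)"

definition rmin_set :: "nat list \<Rightarrow> nat set" where
  "rmin_set s = {i. i < length s \<and> (\<forall>j. i < j \<and> j < length s \<longrightarrow> s ! i < s ! j)}"

definition rmin :: "nat list \<Rightarrow> nat" where
  "rmin s = card (rmin_set s)"

definition Prm :: "nat list \<Rightarrow> nat \<Rightarrow> nat" where
  "Prm s m = sorted_list_of_set (rmin_set s) ! m"

definition Rmin :: "nat list \<Rightarrow> nat \<Rightarrow> nat" where
  "Rmin s m = s ! Prm s m"

definition rpos_cond :: "nat list \<Rightarrow> nat \<Rightarrow> bool" where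
  "rpos_cond s m \<longleftrightarrow> m < rmin s \<and>
     (if m = 0 then card {j. j < length s \<and> s ! j = Rmin s 0} \<ge> 2
      else card {j. Prm s (m - 1) < j \<and> j < length s \<and> s ! j = Rmin s m} \<ge> 2)"

definition rpos :: "nat list \<Rightarrow> nat" where
  "rpos s = (if rmin s = length s then 0
             else if (\<exists>m. rpos_cond s m) then Max {m. rpos_cond s m} else 0)"

text \<open>smallest entry strictly between the two rightmost occurrences of Rmin s (rpos s);
  0 if they are adjacent (or, degenerately, if there are fewer than two occurrences)\<close>
definition sebr :: "nat list \<Rightarrow> nat" where
  "sebr s = (let v = Rmin s (rpos s);
                 occ = sorted_list_of_set {j. j < length s \<and> s ! j = v}
             in if length occ < 2 then 0
                else (let q = occ ! (length occ - 1); p = occ ! (length occ - 2)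
                      in if q = Suc p then 0 else Min {s ! j | j. p < j \<and> j < q}))"

definition T2 :: "nat list set" where
  "T2 = {s. s \<in> Astar \<and> length s \<noteq> rmin s + 1 \<and> sebr s = 0}"

end

theory Submission
  imports Defs
begin

lemma sl_card_less:
  fixes R :: "nat set"
  assumes "finite R" "k < card R"
  shows "card {x\<in>R. x < sorted_list_of_set R ! k} = k"
proof -
  let ?l = "sorted_list_of_set R"
  have sw: "sorted_wrt (<) ?l" using strict_sorted_list_of_set by blast
  have st: "set ?l = R" using assms(1) by simp
  have len: "length ?l = card R" by simp
  have ds: "distinct ?l" by simp
  have "{x\<in>R. x < ?l ! k} = (\<lambda>j. ?l ! j) ` {..<k}"
  proof
    show "(\<lambda>j. ?l ! j) ` {..<k} \<subseteq> {x\<in>R. x < ?l ! k}"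
    proof
      fix x assume "x \<in> (\<lambda>j. ?l ! j) ` {..<k}"
      then obtain j where j: "j < k" "x = ?l ! j" by auto
      have "?l ! j \<in> R" using j assms len st nth_mem[of j ?l] by auto
      moreover have "?l ! j < ?l ! k" using sorted_wrt_nth_less[OF sw j(1)] assms len by auto
      ultimately show "x \<in> {x\<in>R. x < ?l ! k}" using j by auto
    qed
  next
    show "{x\<in>R. x < ?l ! k} \<subseteq> (\<lambda>j. ?l ! j) ` {..<k}"
    proof
      fix x assume x: "x \<in> {x\<in>R. x < ?l ! k}"
      then obtain j where j: "j < length ?l" "x = ?l ! j" using st by (metis (no_types, lifting) in_set_conv_nth mem_Collect_eq)
      have "j < k"
      proof (rule ccontr)
        assume "\<not> j < k"
        then have "k < j \<or> k = j" by auto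
        then have "?l ! k \<le> ?l ! j" using sorted_wrt_nth_less[OF sw, of k j] j by fastforce
        then show False using x j by auto
      qed
      then show "x \<in> (\<lambda>j. ?l ! j) ` {..<k}" using j by auto
    qed
  qed
  moreover have "inj_on (\<lambda>j. ?l ! j) {..<k}"
    using ds assms len by (auto simp: inj_on_def nth_eq_iff_index_eq)
  ultimately show ?thesis by (simp add: card_image)
qed

lemma sl_nth_card:
  fixes R :: "nat set"
  assumes "finite R" "q \<in> R"
  shows "sorted_list_of_set R ! card {x\<in>R. x < q} = q"
proof -
  let ?l = "sorted_list_of_set R"
  obtain k where k: "k < length ?l" "?l ! k = q" using assms by (metis in_set_conv_nth set_sorted_list_of_set)
  have "card {x\<in>R. x < q} = k" using sl_card_less[OF assms(1), of k] k by simp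
  then show ?thesis using k by simp
qed

lemma sl_mono:
  fixes R :: "nat set"
  assumes "finite R" "j < k" "k < card R"
  shows "sorted_list_of_set R ! j < sorted_list_of_set R ! k"
  using sorted_wrt_nth_less[OF strict_sorted_list_of_set[of R]] assms by simp

lemma sl_in:
  fixes R :: "nat set"
  assumes "finite R" "k < card R"
  shows "sorted_list_of_set R ! k \<in> R"
  using assms by (metis length_sorted_list_of_set nth_mem set_sorted_list_of_set)

lemma sl_inj:
  fixes R :: "nat set"
  assumes "finite R" "j < card R" "k < card R" "sorted_list_of_set R ! j = sorted_list_of_set R ! k"
  shows "j = k"
  using assms by (metis sl_card_less)

definition dup :: "nat \<Rightarrow> nat list \<Rightarrow> nat list" where
  "dup p t = take (Suc p) t @ drop p t"
definition hh :: "nat \<Rightarrow> nat \<Rightarrow> nat" where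
  "hh p q = (if q < p then q else Suc q)"
definition hi :: "nat \<Rightarrow> nat \<Rightarrow> nat" where
  "hi p x = (if x < p then x else x - 1)"

lemma dup_len: "p < length t \<Longrightarrow> length (dup p t) = Suc (length t)"
  by (simp add: dup_def)

lemma dup_nth: "p < length t \<Longrightarrow> j \<le> length t \<Longrightarrow>
   dup p t ! j = (if j \<le> p then t ! j else t ! (j - 1))"
proof (cases "j \<le> p")
  case True
  assume "p < length t"
  then show ?thesis using True by (simp add: dup_def nth_append)
next
  case False
  assume p: "p < length t" and j: "j \<le> length t"
  then have "dup p t ! j = drop p t ! (j - Suc p)" using False by (simp add: dup_def nth_append)
  also have "\<dots> = t ! (j - 1)" using False p j by (simp add: nth_drop)
  finally show ?thesis using False by simp
qed

lemma dup_nth_hh: "p < length t \<Longrightarrow> q < length t \<Longrightarrow> dup p t ! hh p q = t ! q"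
  by (auto simp: dup_nth hh_def)

lemma hh_hi: "x \<noteq> p \<Longrightarrow> hh p (hi p x) = x"
  by (auto simp: hh_def hi_def)
lemma hi_hh: "hi p (hh p y) = y"
  by (auto simp: hh_def hi_def)
lemma hh_ne: "hh p y \<noteq> p"
  by (auto simp: hh_def)
lemma hh_mono: "hh p a < hh p b \<longleftrightarrow> a < b"
  by (auto simp: hh_def)
lemma inj_hh: "inj (hh p)"
  by (metis hi_hh injI)
lemma card_hh: "card (hh p ` T) = card T"
  by (simp add: card_image inj_on_subset[OF inj_hh])

lemma image_hh:
  assumes "p \<notin> S" "\<And>x. x \<noteq> p \<Longrightarrow> (x \<in> S \<longleftrightarrow> hi p x \<in> T)"
  shows "S = hh p ` T"
proof
  show "S \<subseteq> hh p ` T"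
  proof
    fix x assume "x \<in> S"
    then have "x \<noteq> p" "hi p x \<in> T" using assms(1) assms(2)[of x] by auto
    then show "x \<in> hh p ` T" using hh_hi by (metis imageI)
  qed
next
  show "hh p ` T \<subseteq> S"
  proof
    fix x assume "x \<in> hh p ` T"
    then obtain y where "y \<in> T" "x = hh p y" by auto
    then show "x \<in> S" using assms(2)[of x] hh_ne hi_hh by metis
  qed
qed

lemma asc_dup:
  assumes "p < length t"
  shows "asc (dup p t) = asc t"
proof -
  let ?S = "{i. Suc i < length (dup p t) \<and> dup p t ! i < dup p t ! Suc i}"
  let ?T = "{i. Suc i < length t \<and> t ! i < t ! Suc i}"
  have "?S = hh p ` ?T"
  proof (rule image_hh)
    show "p \<notin> ?S" using assms by (simp add: dup_nth dup_len)
    fix x assume "x \<noteq> p"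
    then show "x \<in> ?S \<longleftrightarrow> hi p x \<in> ?T"
      using assms by (auto simp: dup_nth dup_len hi_def)
  qed
  then show ?thesis unfolding asc_def by (simp add: card_hh)
qed

lemma take_dup: "p < k \<Longrightarrow> k \<le> length t \<Longrightarrow> take (Suc k) (dup p t) = dup p (take k t)"
  by (simp add: dup_def take_drop min_def)

lemma take_dup_le: "p < length t \<Longrightarrow> k \<le> Suc p \<Longrightarrow> take k (dup p t) = take k t"
  by (simp add: dup_def)

lemma asc_take_mono: "asc (take k t) \<le> asc (take (Suc k) t)"
  unfolding asc_def
  by (rule card_mono) (auto simp: nth_take)

lemma set_dup: "p < length t \<Longrightarrow> set (dup p t) = set t"
proof -
  assume p: "p < length t"
  have "set t = set (take p t) \<union> set (drop p t)" by (metis append_take_drop_id set_append)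
  moreover have "take (Suc p) t = take p t @ [t ! p]" using p by (simp add: take_Suc_conv_app_nth)
  moreover have "t ! p \<in> set (drop p t)" using p by (metis Cons_nth_drop_Suc list.set_intros(1))
  ultimately show ?thesis unfolding dup_def by auto
qed

lemma is_ascent_dup:
  assumes p: "p < length t"
  shows "is_ascent (dup p t) \<longleftrightarrow> is_ascent t"
proof
  assume a: "is_ascent (dup p t)"
  show "is_ascent t" unfolding is_ascent_def
  proof (intro conjI allI impI)
    show "t \<noteq> []" using p by auto
    show "t ! 0 = 0" using a p unfolding is_ascent_def by (simp add: dup_nth)
    fix i assume i: "1 \<le> i \<and> i < length t"
    show "t ! i \<le> asc (take i t) + 1"
    proof (cases "i \<le> p")
      case True
      then have "t ! i = dup p t ! i" "take i t = take i (dup p t)" using p i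
        by (simp_all add: dup_nth take_dup_le)
      then show ?thesis using a i p unfolding is_ascent_def by (simp add: dup_len)
    next
      case False
      then have "t ! i = dup p t ! Suc i" "asc (take i t) = asc (take (Suc i) (dup p t))"
        using p i by (simp_all add: dup_nth take_dup asc_dup)
      then show ?thesis using a i p unfolding is_ascent_def by (simp add: dup_len)
    qed
  qed
next
  assume a: "is_ascent t"
  show "is_ascent (dup p t)" unfolding is_ascent_def
  proof (intro conjI allI impI)
    show "dup p t \<noteq> []" using p by (simp add: dup_def)
    show "dup p t ! 0 = 0" using a p unfolding is_ascent_def by (simp add: dup_nth)
    fix i assume i: "1 \<le> i \<and> i < length (dup p t)"
    show "dup p t ! i \<le> asc (take i (dup p t)) + 1"
    proof (cases "i \<le> p")
      case True
      then have "dup p t ! i = t ! i" "take i (dup p t) = take i t" using p i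
        by (simp_all add: dup_nth take_dup_le)
      moreover have "i < length t" using True p by simp
      ultimately show ?thesis using a i unfolding is_ascent_def by simp
    next
      case False
      show ?thesis
      proof (cases "i = Suc p")
        case True
        have "dup p t ! i = t ! p" using True p by (simp add: dup_nth)
        moreover have "take i (dup p t) = take i t" using True p by (simp add: take_dup_le)
        moreover have "t ! p \<le> asc (take p t) + 1"
          using a p unfolding is_ascent_def by (cases p) auto
        moreover have "asc (take p t) \<le> asc (take (Suc p) t)" by (rule asc_take_mono)
        ultimately show ?thesis using True by simp
      next
        case F2: False
        then obtain k where k: "i = Suc k" "p < k" using False i F2 by (cases i) auto
        then have "dup p t ! i = t ! k" "asc (take i (dup p t)) = asc (take k t)"
          using p i by (simp_all add: dup_nth dup_len take_dup asc_dup)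
        then show ?thesis using a i p k unfolding is_ascent_def by (simp add: dup_len)
      qed
    qed
  qed
qed

lemma asc_cond: "is_ascent t \<Longrightarrow> 1 \<le> i \<Longrightarrow> i < length t \<Longrightarrow> t ! i \<le> asc (take i t) + 1"
  unfolding is_ascent_def by blast

lemma asc0: "is_ascent t \<Longrightarrow> t ! 0 = 0 \<and> t \<noteq> []"
  unfolding is_ascent_def by blast

lemma asc_le: "asc l \<le> length l - 1"
proof -
  have "{i. Suc i < length l \<and> l ! i < l ! Suc i} \<subseteq> {..<length l - 1}" by auto
  then show ?thesis unfolding asc_def by (metis card_lessThan card_mono finite_lessThan)
qed

lemma asc_full:
  assumes "asc l = length l - 1" "Suc k < length l"
  shows "l ! k < l ! Suc k"
proof -
  let ?I = "{i. Suc i < length l \<and> l ! i < l ! Suc i}"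
  have "?I \<subseteq> {..<length l - 1}" by auto
  moreover have "card ?I = card {..<length l - 1}" using assms(1) unfolding asc_def by simp
  ultimately have "?I = {..<length l - 1}" by (simp add: card_subset_eq)
  moreover have "k \<in> {..<length l - 1}" using assms(2) by simp
  ultimately have "k \<in> ?I" by simp
  then show ?thesis by simp
qed

lemma incr_ge:
  assumes "\<And>k. Suc k < length l \<Longrightarrow> l ! k < l ! Suc k" "k < length l"
  shows "l ! 0 + k \<le> l ! k"
  using assms(2)
proof (induction k)
  case 0 then show ?case by simp
next
  case (Suc k)
  then have "l ! 0 + k \<le> l ! k" by simp
  moreover have "l ! k < l ! Suc k" using assms(1) Suc.prems by simp
  ultimately show ?case by simp
qed

lemma asc_bound:
  assumes "is_ascent t" "i < length t"
  shows "t ! i \<le> i"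
proof (cases "i = 0")
  case True then show ?thesis using assms unfolding is_ascent_def by simp
next
  case False
  then have "t ! i \<le> asc (take i t) + 1" using assms unfolding is_ascent_def by simp
  moreover have "asc (take i t) \<le> i - 1" using asc_le[of "take i t"] assms by simp
  ultimately show ?thesis using False by simp
qed

lemma fixed_down:
  assumes a: "is_ascent t" and i: "i < length t" "t ! i = i" and j: "j \<le> i"
  shows "t ! j = j"
proof (cases "i = 0")
  case True then show ?thesis using j i a unfolding is_ascent_def by simp
next
  case False
  let ?l = "take i t"
  have "t ! i \<le> asc ?l + 1" using asc_cond[OF a, of i] i False by simp
  moreover have "asc ?l \<le> length ?l - 1" by (rule asc_le)
  ultimately have eq: "asc ?l = length ?l - 1" using i False by simp
  show ?thesis
  proof (cases "j = i")
    case True then show ?thesis using i by simp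
  next
    case False
    then have ji: "j < i" using j by simp
    have "?l ! 0 + j \<le> ?l ! j"
      by (rule incr_ge) (use asc_full[OF eq] ji i in auto)
    then have "j \<le> t ! j" using ji a unfolding is_ascent_def by simp
    moreover have "t ! j \<le> j" using asc_bound[OF a] ji i by simp
    ultimately show ?thesis by simp
  qed
qed

lemma maxs_set:
  assumes a: "is_ascent t"
  shows "{i. i < length t \<and> t ! i = i} = {..<maxs t}"
proof -
  define S where "S = {i. i < length t \<and> t ! i = i}"
  have fin: "finite S" unfolding S_def by (rule finite_subset[of _ "{..<length t}"]) auto
  have "S = {..<card S}"
  proof (cases "S = {}")
    case True then show ?thesis by (metis card.empty lessThan_0)
  next
    case False
    define M where "M = Max S"
    have M: "M \<in> S" using False fin Max_in M_def by blast
    have "S = {..M}"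
    proof
      show "S \<subseteq> {..M}" using Max_ge[OF fin] M_def by auto
      show "{..M} \<subseteq> S"
      proof
        fix x assume "x \<in> {..M}"
        then have "x \<le> M" by simp
        then show "x \<in> S" using M fixed_down[OF a, of M x] unfolding S_def by simp
      qed
    qed
    then show ?thesis by (simp add: lessThan_Suc_atMost[symmetric])
  qed
  then show ?thesis unfolding maxs_def S_def by simp
qed

lemma rmin_set_sub: "rmin_set t \<subseteq> {..<length t}"
  unfolding rmin_set_def by auto

lemma rmin_set_fin: "finite (rmin_set t)"
  using rmin_set_sub finite_subset by blast

lemma rmin_le: "rmin t \<le> length t"
  unfolding rmin_def using card_mono[OF finite_lessThan rmin_set_sub, of t] by simp

lemma identity:
  assumes a: "is_ascent t" and r: "rmin t = length t"
  shows "t = [0..<length t]"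
proof -
  have "rmin_set t = {..<length t}"
    using rmin_set_sub r unfolding rmin_def by (simp add: card_subset_eq)
  then have inc: "\<And>k. Suc k < length t \<Longrightarrow> t ! k < t ! Suc k"
  proof -
    fix k assume k: "Suc k < length t"
    then have "k \<in> rmin_set t" using \<open>rmin_set t = {..<length t}\<close> by simp
    then show "t ! k < t ! Suc k" using k unfolding rmin_set_def by blast
  qed
  have "\<And>k. k < length t \<Longrightarrow> t ! k = k"
  proof -
    fix k assume k: "k < length t"
    have "t ! 0 + k \<le> t ! k" using incr_ge[OF inc k] by simp
    moreover have "t ! 0 = 0" using a unfolding is_ascent_def by simp
    moreover have "t ! k \<le> k" using asc_bound[OF a k] .
    ultimately show "t ! k = k" by simp
  qed
  then show ?thesis by (simp add: nth_equalityI)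
qed

lemma card_split:
  assumes "finite S" shows "card S = card (S - {p}) + (if p \<in> S then 1 else 0)"
proof (cases "p \<in> S")
  case True
  have "card S > 0" using True assms card_gt_0_iff by blast
  then show ?thesis using True assms by (simp add: card_Diff_singleton)
qed simp

lemma count_dup:
  assumes p: "p < length t"
  shows "card {j. j < length (dup p t) \<and> dup p t ! j = v}
       = card {j. j < length t \<and> t ! j = v} + (if t ! p = v then 1 else 0)"
proof -
  let ?S = "{j. j < length (dup p t) \<and> dup p t ! j = v}"
  let ?T = "{j. j < length t \<and> t ! j = v}"
  have "?S - {p} = hh p ` ?T"
  proof (rule image_hh)
    show "p \<notin> ?S - {p}" by simp
    fix x assume "x \<noteq> p"
    then show "x \<in> ?S - {p} \<longleftrightarrow> hi p x \<in> ?T"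
      using p by (auto simp: dup_nth dup_len hi_def)
  qed
  moreover have "p \<in> ?S \<longleftrightarrow> t ! p = v" using p by (simp add: dup_nth dup_len)
  moreover have "finite ?S" by simp
  ultimately show ?thesis using card_split[of ?S p] by (simp add: card_hh)
qed

lemma count_dup_after:
  assumes p: "p < length t"
  shows "card {j. hh p a < j \<and> j < length (dup p t) \<and> dup p t ! j = v}
       = card {j. a < j \<and> j < length t \<and> t ! j = v} + (if a < p \<and> t ! p = v then 1 else 0)"
proof -
  let ?S = "{j. hh p a < j \<and> j < length (dup p t) \<and> dup p t ! j = v}"
  let ?T = "{j. a < j \<and> j < length t \<and> t ! j = v}"
  have "?S - {p} = hh p ` ?T"
  proof (rule image_hh)
    show "p \<notin> ?S - {p}" by simp
    fix x assume x: "x \<noteq> p"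
    have "hh p a < x \<longleftrightarrow> a < hi p x" using hh_mono[of p a "hi p x"] hh_hi[OF x] by simp
    then show "x \<in> ?S - {p} \<longleftrightarrow> hi p x \<in> ?T"
      using p x by (auto simp: dup_nth dup_len hi_def)
  qed
  moreover have "p \<in> ?S \<longleftrightarrow> a < p \<and> t ! p = v" using p by (auto simp: dup_nth dup_len hh_def)
  moreover have "finite ?S" by (rule finite_subset[of _ "{..<length (dup p t)}"]) auto
  ultimately show ?thesis using card_split[of ?S p] by (simp add: card_hh)
qed

lemma rmin_set_dup:
  assumes p: "p < length t"
  shows "rmin_set (dup p t) = hh p ` rmin_set t"
proof (rule image_hh)
  let ?s = "dup p t"
  have ls: "length ?s = Suc (length t)" using p by (simp add: dup_len)
  show "p \<notin> rmin_set ?s"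
    using p ls by (auto simp: rmin_set_def dup_nth intro!: exI[of _ "Suc p"])
  fix x assume x: "x \<noteq> p"
  let ?y = "hi p x"
  have xy: "x = hh p ?y" using hh_hi[OF x] by simp
  have lx: "x < length ?s \<longleftrightarrow> ?y < length t" using x ls p by (auto simp: hi_def)
  show "x \<in> rmin_set ?s \<longleftrightarrow> ?y \<in> rmin_set t"
  proof
    assume xs: "x \<in> rmin_set ?s"
    then have yl: "?y < length t" using lx unfolding rmin_set_def by simp
    have sx: "?s ! x = t ! ?y" using xy dup_nth_hh[OF p yl] by simp
    show "?y \<in> rmin_set t" unfolding rmin_set_def
    proof (intro CollectI conjI allI impI)
      show "?y < length t" by fact
      fix k assume k: "?y < k \<and> k < length t"
      have "x < hh p k" using xy k hh_mono by metis
      moreover have "hh p k < length ?s" using k ls by (auto simp: hh_def)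
      ultimately have "?s ! x < ?s ! hh p k" using xs unfolding rmin_set_def by blast
      then show "t ! ?y < t ! k" using sx dup_nth_hh[OF p] k by simp
    qed
  next
    assume yt: "?y \<in> rmin_set t"
    then have yl: "?y < length t" unfolding rmin_set_def by simp
    have sx: "?s ! x = t ! ?y" using xy dup_nth_hh[OF p yl] by simp
    show "x \<in> rmin_set ?s" unfolding rmin_set_def
    proof (intro CollectI conjI allI impI)
      show "x < length ?s" using lx yl by simp
      fix j assume j: "x < j \<and> j < length ?s"
      show "?s ! x < ?s ! j"
      proof (cases "j = p")
        case True
        then have "?y < p" using j x by (auto simp: hi_def)
        then have "t ! ?y < t ! p" using yt p unfolding rmin_set_def by blast
        moreover have "?s ! p = t ! p" using p by (simp add: dup_nth)
        ultimately show ?thesis using sx True by simp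
      next
        case False
        have jj: "j = hh p (hi p j)" using hh_hi[OF False] by simp
        have "?y < hi p j" using j xy jj hh_mono by metis
        moreover have "hi p j < length t" using j ls False p by (auto simp: hi_def)
        ultimately have "t ! ?y < t ! hi p j" using yt unfolding rmin_set_def by blast
        then show ?thesis using sx jj dup_nth_hh[OF p \<open>hi p j < length t\<close>] by simp
      qed
    qed
  qed
qed

lemma rmin_dup: "p < length t \<Longrightarrow> rmin (dup p t) = rmin t"
  unfolding rmin_def by (simp add: rmin_set_dup card_hh)

lemma Prm_in: "m < rmin t \<Longrightarrow> Prm t m \<in> rmin_set t"
  unfolding Prm_def rmin_def using sl_in rmin_set_fin by blast

lemma Prm_len: "m < rmin t \<Longrightarrow> Prm t m < length t"
  using Prm_in rmin_set_sub by blast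

lemma Prm_mono: "j < k \<Longrightarrow> k < rmin t \<Longrightarrow> Prm t j < Prm t k"
  unfolding Prm_def rmin_def using sl_mono rmin_set_fin by blast

lemma Prm_inj: "j < rmin t \<Longrightarrow> k < rmin t \<Longrightarrow> Prm t j = Prm t k \<Longrightarrow> j = k"
  unfolding Prm_def rmin_def using sl_inj rmin_set_fin by blast

lemma Prm_card: "m < rmin t \<Longrightarrow> card {x \<in> rmin_set t. x < Prm t m} = m"
  unfolding Prm_def rmin_def using sl_card_less rmin_set_fin by blast

lemma Prm_of: "q \<in> rmin_set t \<Longrightarrow> Prm t (card {x \<in> rmin_set t. x < q}) = q"
  unfolding Prm_def using sl_nth_card rmin_set_fin by blast

lemma Prm_of_lt: "q \<in> rmin_set t \<Longrightarrow> card {x \<in> rmin_set t. x < q} < rmin t"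
  unfolding rmin_def
  by (rule psubset_card_mono) (use rmin_set_fin in auto)

lemma Prm_dup:
  assumes p: "p < length t" and m: "m < rmin t"
  shows "Prm (dup p t) m = hh p (Prm t m)"
proof -
  let ?q = "Prm t m"
  have q: "?q \<in> rmin_set t" using Prm_in[OF m] .
  have "{x \<in> rmin_set (dup p t). x < hh p ?q} = hh p ` {y \<in> rmin_set t. y < ?q}"
    using rmin_set_dup[OF p] hh_mono by auto
  then have "card {x \<in> rmin_set (dup p t). x < hh p ?q} = m"
    using Prm_card[OF m] card_hh by simp
  moreover have "hh p ?q \<in> rmin_set (dup p t)" using rmin_set_dup[OF p] q by simp
  ultimately show ?thesis using Prm_of by metis
qed

lemma Rmin_dup:
  assumes p: "p < length t" and m: "m < rmin t"
  shows "Rmin (dup p t) m = Rmin t m"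
  unfolding Rmin_def using Prm_dup[OF p m] dup_nth_hh[OF p Prm_len[OF m]] by simp

lemma last_zero:
  assumes a: "is_ascent t"
  shows "0 < rmin t \<and> Rmin t 0 = 0"
proof -
  define Z where "Z = {j. j < length t \<and> t ! j = 0}"
  have fin: "finite Z" unfolding Z_def by (rule finite_subset[of _ "{..<length t}"]) auto
  have "0 \<in> Z" using asc0[OF a] unfolding Z_def by simp
  then have ne: "Z \<noteq> {}" by auto
  define z where "z = Max Z"
  have zZ: "z \<in> Z" using Max_in[OF fin ne] z_def by simp
  have zmax: "\<And>j. j \<in> Z \<Longrightarrow> j \<le> z" using Max_ge[OF fin] z_def by simp
  have zR: "z \<in> rmin_set t"
    unfolding rmin_set_def
  proof (intro CollectI conjI allI impI)
    show "z < length t" using zZ Z_def by simp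
    fix j assume j: "z < j \<and> j < length t"
    then have "j \<notin> Z" using zmax by fastforce
    then show "t ! z < t ! j" using j zZ unfolding Z_def by simp
  qed
  have e: "{x \<in> rmin_set t. x < z} = {}"
  proof (rule ccontr)
    assume "{x \<in> rmin_set t. x < z} \<noteq> {}"
    then obtain x where x: "x \<in> rmin_set t" "x < z" by auto
    then have "t ! x < t ! z" using zZ unfolding rmin_set_def Z_def by auto
    then show False using zZ unfolding Z_def by simp
  qed
  have "Prm t (card {x \<in> rmin_set t. x < z}) = z" by (rule Prm_of[OF zR])
  then have "Prm t 0 = z" unfolding e by simp
  moreover have "card {x \<in> rmin_set t. x < z} < rmin t" by (rule Prm_of_lt[OF zR])
  then have "0 < rmin t" unfolding e by simp
  ultimately show ?thesis using zZ unfolding Rmin_def Z_def by simp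
qed

lemma Rmin_mono: "j < k \<Longrightarrow> k < rmin t \<Longrightarrow> Rmin t j < Rmin t k"
proof -
  assume jk: "j < k" "k < rmin t"
  have "Prm t j < Prm t k" using Prm_mono jk by blast
  moreover have "Prm t j \<in> rmin_set t" using Prm_in jk by simp
  moreover have "Prm t k < length t" using Prm_len jk by simp
  ultimately show ?thesis unfolding Rmin_def rmin_set_def by blast
qed

lemma Rmin_zero_iff:
  assumes a: "is_ascent t" and m: "m < rmin t"
  shows "Rmin t m = 0 \<longleftrightarrow> m = 0"
proof (cases "m = 0")
  case True then show ?thesis using last_zero[OF a] by simp
next
  case False
  then have "Rmin t 0 < Rmin t m" using Rmin_mono[of 0 m t] m by simp
  then show ?thesis using False by simp
qed

lemma cond_j:
  assumes c: "rpos_cond t m"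
  shows "\<exists>j < Prm t m. t ! j = Rmin t m \<and> (0 < m \<longrightarrow> Prm t (m - 1) < j)"
proof -
  have m: "m < rmin t" using c unfolding rpos_cond_def by simp
  define S where "S = (if m = 0 then {j. j < length t \<and> t ! j = Rmin t 0}
      else {j. Prm t (m - 1) < j \<and> j < length t \<and> t ! j = Rmin t m})"
  have c2: "2 \<le> card S" using c unfolding rpos_cond_def S_def by (cases "m = 0") auto
  have memS: "\<And>j. j \<in> S \<Longrightarrow> j < length t \<and> t ! j = Rmin t m \<and> (0 < m \<longrightarrow> Prm t (m - 1) < j)"
    unfolding S_def by (cases "m = 0") auto
  have fin: "finite S" by (rule finite_subset[of _ "{..<length t}"]) (use memS in auto)
  have "\<exists>j\<in>S. j \<noteq> Prm t m"
  proof (rule ccontr)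
    assume "\<not> (\<exists>j\<in>S. j \<noteq> Prm t m)"
    then have "S \<subseteq> {Prm t m}" by auto
    then have "card S \<le> 1" using card_mono[of "{Prm t m}" S] by simp
    then show False using c2 by simp
  qed
  then obtain j where j: "j \<in> S" "j \<noteq> Prm t m" by blast
  have "j < Prm t m"
  proof (rule ccontr)
    assume "\<not> j < Prm t m"
    then have "Prm t m < j" using j(2) by simp
    then have "t ! Prm t m < t ! j" using Prm_in[OF m] memS[OF j(1)] unfolding rmin_set_def by blast
    then show False using memS[OF j(1)] unfolding Rmin_def by simp
  qed
  then show ?thesis using memS[OF j(1)] by blast
qed

lemma cond_maxs:
  assumes a: "is_ascent t" and c: "rpos_cond t m"
  shows "maxs t \<le> Prm t m"
proof (rule ccontr)
  assume "\<not> maxs t \<le> Prm t m"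
  then have lt: "Prm t m < maxs t" by simp
  obtain j where j: "j < Prm t m" "t ! j = Rmin t m" using cond_j[OF c] by blast
  have "Prm t m \<in> {..<maxs t}" "j \<in> {..<maxs t}" using lt j by auto
  then have "t ! Prm t m = Prm t m" "t ! j = j" using maxs_set[OF a] by blast+
  then show False using j unfolding Rmin_def by simp
qed

lemma rmin_id: "rmin [0..<n] = n"
proof -
  have "rmin_set [0..<n] = {..<n}" unfolding rmin_set_def by auto
  then show ?thesis unfolding rmin_def by simp
qed

lemma rpos_props:
  assumes a: "is_ascent t" and nid: "t \<noteq> [0..<length t]" and ex: "\<exists>m. rpos_cond t m"
  shows "rpos_cond t (rpos t) \<and> (\<forall>m. rpos_cond t m \<longrightarrow> m \<le> rpos t)"
proof -
  have "rmin t \<noteq> length t" using identity[OF a] nid by blast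
  then have r: "rpos t = Max {m. rpos_cond t m}" unfolding rpos_def using ex by simp
  have fin: "finite {m. rpos_cond t m}"
    by (rule finite_subset[of _ "{..<rmin t}"]) (auto simp: rpos_cond_def)
  have ne: "{m. rpos_cond t m} \<noteq> {}" using ex by auto
  show ?thesis using Max_in[OF fin ne] Max_ge[OF fin] r by auto
qed

lemma two_le_card: "finite S \<Longrightarrow> a \<in> S \<Longrightarrow> b \<in> S \<Longrightarrow> a \<noteq> b \<Longrightarrow> 2 \<le> card S"
  using card_mono[of S "{a, b}"] by simp

lemma cond_exists:
  assumes a: "is_ascent t" and nid: "t \<noteq> [0..<length t]"
  shows "\<exists>m. rpos_cond t m"
proof (rule ccontr)
  assume nc: "\<not> (\<exists>m. rpos_cond t m)"
  have claim: "k < length t \<longrightarrow> t ! k = k \<and> k \<in> rmin_set t" for k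
  proof (induction k rule: less_induct)
    case (less k)
    show ?case
    proof
      assume kl: "k < length t"
      have pre: "\<And>j. j < k \<Longrightarrow> t ! j = j \<and> j \<in> rmin_set t" using less kl by simp
      have ge: "\<And>j. k \<le> j \<Longrightarrow> j < length t \<Longrightarrow> k \<le> t ! j"
      proof -
        fix j assume j: "k \<le> j" "j < length t"
        show "k \<le> t ! j"
        proof (cases "k = 0")
          case False
          then have "k - 1 \<in> rmin_set t" "t ! (k - 1) = k - 1" using pre[of "k - 1"] by auto
          then have "t ! (k - 1) < t ! j" using j False unfolding rmin_set_def by auto
          then show ?thesis using \<open>t ! (k - 1) = k - 1\<close> by simp
        qed simp
      qed
      have tk: "t ! k = k" using asc_bound[OF a kl] ge[of k] kl by simp
      have "k \<in> rmin_set t"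
      proof (rule ccontr)
        assume nk: "k \<notin> rmin_set t"
        then obtain j where j: "k < j" "j < length t" "\<not> t ! k < t ! j"
          using kl unfolding rmin_set_def by auto
        have tj: "t ! j = k" using j tk ge[of j] by simp
        define Z where "Z = {y. y < length t \<and> t ! y = k}"
        have finZ: "finite Z" unfolding Z_def by (rule finite_subset[of _ "{..<length t}"]) auto
        have jZ: "j \<in> Z" using j tj Z_def by simp
        define z where "z = Max Z"
        have zZ: "z \<in> Z" using Max_in[OF finZ] jZ z_def by auto
        have zmax: "\<And>y. y \<in> Z \<Longrightarrow> y \<le> z" using Max_ge[OF finZ] z_def by simp
        have jz: "j \<le> z" using zmax jZ by simp
        have tz: "t ! z = k" "z < length t" using zZ Z_def by auto
        have zR: "z \<in> rmin_set t" unfolding rmin_set_def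
        proof (intro CollectI conjI allI impI)
          show "z < length t" by fact
          fix y assume y: "z < y \<and> y < length t"
          then have "y \<notin> Z" using zmax by fastforce
          then have "t ! y \<noteq> k" using y Z_def by simp
          moreover have "k \<le> t ! y" using ge[of y] y j jz by simp
          ultimately show "t ! z < t ! y" using tz by simp
        qed
        have setk: "{x \<in> rmin_set t. x < z} = {..<k}"
        proof
          show "{..<k} \<subseteq> {x \<in> rmin_set t. x < z}" using pre j jz by fastforce
          show "{x \<in> rmin_set t. x < z} \<subseteq> {..<k}"
          proof
            fix x assume x: "x \<in> {x \<in> rmin_set t. x < z}"
            show "x \<in> {..<k}"
            proof (rule ccontr)
              assume "x \<notin> {..<k}"
              then have "k \<le> t ! x" using ge x tz by (auto simp: rmin_set_def)
              moreover have "t ! x < t ! z" using x tz unfolding rmin_set_def by auto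
              ultimately show False using tz by simp
            qed
          qed
        qed
        have Pk: "Prm t k = z" using Prm_of[OF zR] unfolding setk by simp
        have kr: "k < rmin t" using Prm_of_lt[OF zR] unfolding setk by simp
        have Rk: "Rmin t k = k" using Pk tz unfolding Rmin_def by simp
        have "rpos_cond t k"
        proof (cases "k = 0")
          case True
          let ?S = "{y. y < length t \<and> t ! y = Rmin t 0}"
          have "2 \<le> card ?S"
            by (rule two_le_card[of _ k j]) (use True Rk tk tj j kl in auto)
          then show ?thesis using True kr unfolding rpos_cond_def by simp
        next
          case False
          have k1: "k - 1 \<in> rmin_set t" using pre[of "k - 1"] False by simp
          have "{x \<in> rmin_set t. x < k - 1} = {..<k - 1}" using pre by fastforce
          then have P1: "Prm t (k - 1) = k - 1" using Prm_of[OF k1] by simp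
          let ?S = "{y. Prm t (k - 1) < y \<and> y < length t \<and> t ! y = Rmin t k}"
          have "2 \<le> card ?S"
            by (rule two_le_card[of _ k j]) (use False P1 Rk tk tj j kl in auto)
          then show ?thesis using False kr unfolding rpos_cond_def by simp
        qed
        then show False using nc by blast
      qed
      then show "t ! k = k \<and> k \<in> rmin_set t" using tk by simp
    qed
  qed
  have "t = [0..<length t]" by (rule nth_equalityI) (use claim in auto)
  then show False using nid by simp
qed

lemma cond_dup_gt:
  assumes i: "i < m" "m < rmin t"
  shows "rpos_cond (dup (Prm t i) t) m \<longleftrightarrow> rpos_cond t m"
proof -
  let ?p = "Prm t i"
  let ?a = "Prm t (m - 1)"
  have p: "?p < length t" using Prm_len i by simp
  have m0: "m \<noteq> 0" using i by simp
  have pa: "\<not> ?a < ?p"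
  proof (cases "i = m - 1")
    case False
    then have "i < m - 1" using i by simp
    moreover have "m - 1 < rmin t" using i by simp
    ultimately have "?p < ?a" using Prm_mono[of i "m - 1" t] by blast
    then show ?thesis by simp
  qed simp
  have P: "Prm (dup ?p t) (m - 1) = hh ?p ?a" using Prm_dup[OF p, of "m - 1"] i by simp
  have R: "Rmin (dup ?p t) m = Rmin t m" using Rmin_dup[OF p] i by simp
  have C: "card {j. hh ?p ?a < j \<and> j < length (dup ?p t) \<and> dup ?p t ! j = Rmin t m}
       = card {j. ?a < j \<and> j < length t \<and> t ! j = Rmin t m}"
    using count_dup_after[OF p, of ?a "Rmin t m"] pa by simp
  show ?thesis unfolding rpos_cond_def using m0 P R C rmin_dup[OF p] by simp
qed

lemma G:
  assumes a: "is_ascent t" and nid: "t \<noteq> [0..<length t]"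
    and ri: "rpos t \<le> i" and ir: "i < rmin t"
  shows "is_ascent (dup (Prm t i) t) \<and> dup (Prm t i) t \<noteq> [0..<length (dup (Prm t i) t)]
    \<and> length (dup (Prm t i) t) = Suc (length t) \<and> rmin (dup (Prm t i) t) = rmin t
    \<and> rpos (dup (Prm t i) t) = i \<and> Prm (dup (Prm t i) t) i = Suc (Prm t i)
    \<and> sebr (dup (Prm t i) t) = 0 \<and> asc (dup (Prm t i) t) = asc t
    \<and> maxs (dup (Prm t i) t) = maxs t \<and> ealm (dup (Prm t i) t) = ealm t
    \<and> zero (dup (Prm t i) t) = zero t + (if i = 0 then 1 else 0)
    \<and> rep (dup (Prm t i) t) = rep t + 1"
proof -
  define p where "p = Prm t i"
  define s where "s = dup p t"
  have p: "p < length t" using Prm_len ir p_def by simp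
  have pR: "p \<in> rmin_set t" using Prm_in ir p_def by simp
  have ls: "length s = Suc (length t)" using dup_len[OF p] s_def by simp
  have as: "is_ascent s" using is_ascent_dup[OF p] a s_def by simp
  have sp: "s ! p = t ! p" "s ! Suc p = t ! p" using p by (simp_all add: s_def dup_nth)
  have snid: "s \<noteq> [0..<length s]"
  proof
    assume "s = [0..<length s]"
    then have "s ! p = p" "s ! Suc p = Suc p" using ls p by (metis Suc_mono diff_zero less_SucI nth_upt plus_nat.add_0)+
    then show False using sp by simp
  qed
  have rm: "rmin s = rmin t" using rmin_dup[OF p] s_def by simp
  have Ps: "Prm s i = Suc p" using Prm_dup[OF p ir] s_def p_def by (simp add: hh_def)
  have Rs: "Rmin s i = t ! p" using Rmin_dup[OF p ir] s_def p_def by (simp add: Rmin_def)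
  have ex: "\<exists>m. rpos_cond t m" using cond_exists[OF a nid] .
  have rp: "rpos_cond t (rpos t) \<and> (\<forall>m. rpos_cond t m \<longrightarrow> m \<le> rpos t)" using rpos_props[OF a nid ex] .
  have ci: "rpos_cond s i"
  proof (cases "i = 0")
    case True
    have "card {j. j < length s \<and> s ! j = t ! p} = card {j. j < length t \<and> t ! j = t ! p} + 1"
      using count_dup[OF p, of "t ! p"] s_def by simp
    moreover have "1 \<le> card {j. j < length t \<and> t ! j = t ! p}"
    proof -
      have "finite {j. j < length t \<and> t ! j = t ! p}" by simp
      moreover have "p \<in> {j. j < length t \<and> t ! j = t ! p}" using p by simp
      ultimately show ?thesis by (metis One_nat_def Suc_leI card_gt_0_iff empty_iff)
    qed
    ultimately show ?thesis using True rm ir Rs unfolding rpos_cond_def by simp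
  next
    case False
    let ?a = "Prm t (i - 1)"
    have ap: "?a < p" using Prm_mono[of "i - 1" i t] ir False p_def by simp
    have P1: "Prm s (i - 1) = hh p ?a" using Prm_dup[OF p, of "i - 1"] ir s_def by simp
    have "card {j. hh p ?a < j \<and> j < length s \<and> s ! j = t ! p}
        = card {j. ?a < j \<and> j < length t \<and> t ! j = t ! p} + 1"
      using count_dup_after[OF p, of ?a "t ! p"] ap s_def by simp
    moreover have "1 \<le> card {j. ?a < j \<and> j < length t \<and> t ! j = t ! p}"
    proof -
      have "finite {j. ?a < j \<and> j < length t \<and> t ! j = t ! p}"
        by (rule finite_subset[of _ "{..<length t}"]) auto
      moreover have "p \<in> {j. ?a < j \<and> j < length t \<and> t ! j = t ! p}" using ap p by simp
      ultimately show ?thesis by (metis One_nat_def Suc_leI card_gt_0_iff empty_iff)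
    qed
    ultimately show ?thesis using False rm ir Rs P1 unfolding rpos_cond_def by simp
  qed
  have cgt: "\<And>m. rpos_cond s m \<Longrightarrow> m \<le> i"
  proof (rule ccontr)
    fix m assume c: "rpos_cond s m" and "\<not> m \<le> i"
    then have im: "i < m" by simp
    have "m < rmin t" using c rm unfolding rpos_cond_def by simp
    then have "rpos_cond t m" using cond_dup_gt[OF im] c s_def p_def by simp
    then show False using rp ri im by fastforce
  qed
  have rps: "rpos s = i"
  proof -
    have "rmin s \<noteq> length s" using rm ls rmin_le[of t] by simp
    then have "rpos s = Max {m. rpos_cond s m}" unfolding rpos_def using ci by auto
    moreover have "finite {m. rpos_cond s m}"
      by (rule finite_subset[of _ "{..<rmin s}"]) (auto simp: rpos_cond_def)
    ultimately show ?thesis using ci cgt by (metis (mono_tags, lifting) Max_eqI mem_Collect_eq)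
  qed
  define Ob where "Ob = {j. j \<le> p \<and> t ! j = t ! p}"
  define Oc where "Oc = {j. j < length s \<and> s ! j = t ! p}"
  have finO': "finite Ob" unfolding Ob_def by (rule finite_subset[of _ "{..p}"]) auto
  have pO': "p \<in> Ob" unfolding Ob_def by simp
  have hO: "Oc = insert (Suc p) Ob"
  proof (rule set_eqI)
    fix j
    show "j \<in> Oc \<longleftrightarrow> j \<in> insert (Suc p) Ob"
    proof (cases "j \<le> Suc p")
      case True
      then show ?thesis using p unfolding Oc_def Ob_def s_def
        by (auto simp: dup_nth dup_len le_Suc_eq)
    next
      case False
      have "j \<notin> Oc"
      proof
        assume jO: "j \<in> Oc"
        then have jl: "j < length s" "s ! j = t ! p" unfolding Oc_def by auto
        then have "s ! j = t ! (j - 1)" using False p ls unfolding s_def by (simp add: dup_nth)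
        moreover have "p < j - 1" "j - 1 < length t" using False jl ls by auto
        then have "t ! p < t ! (j - 1)" using pR unfolding rmin_set_def by blast
        ultimately show False using jl by simp
      qed
      moreover have "j \<notin> insert (Suc p) Ob" using False unfolding Ob_def by auto
      ultimately show ?thesis by simp
    qed
  qed
  have SpO: "Suc p \<notin> Ob" unfolding Ob_def by simp
  have finO: "finite Oc" using hO finO' by simp
  have cO: "card Oc = Suc (card Ob)" using hO finO' SpO by simp
  have cO'1: "1 \<le> card Ob" using pO' finO' by (metis One_nat_def Suc_leI card_gt_0_iff empty_iff)
  have e1: "{x \<in> Oc. x < Suc p} = Ob" using hO unfolding Ob_def by auto
  have e2: "{x \<in> Oc. x < p} = Ob - {p}" using hO unfolding Ob_def by auto
  have occ1: "sorted_list_of_set Oc ! (card Oc - 1) = Suc p"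
    using sl_nth_card[OF finO, of "Suc p"] e1 cO hO by simp
  have occ2: "sorted_list_of_set Oc ! (card Oc - 2) = p"
    using sl_nth_card[OF finO, of p] e2 cO hO pO' finO' by (simp add: card_Diff_singleton)
  have lenocc: "length (sorted_list_of_set Oc) = card Oc" by simp
  have sb: "sebr s = 0"
  proof -
    have v: "Rmin s (rpos s) = t ! p" using rps Rs by simp
    show ?thesis unfolding sebr_def Let_def v unfolding Oc_def[symmetric]
      using occ1 occ2 lenocc cO cO'1 by simp
  qed
  have mp: "maxs t \<le> p"
  proof -
    have "maxs t \<le> Prm t (rpos t)" using cond_maxs[OF a] rp by simp
    moreover have "Prm t (rpos t) \<le> p"
    proof (cases "rpos t = i")
      case False
      then show ?thesis using Prm_mono[of "rpos t" i t] ri ir p_def by simp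
    qed (simp add: p_def)
    ultimately show ?thesis by simp
  qed
  have ml: "maxs t < length t" using mp p by simp
  have Sst: "{j. j < length s \<and> s ! j = j} = {j. j < length t \<and> t ! j = j}"
  proof -
    have St: "{j. j < length t \<and> t ! j = j} = {..<maxs t}" using maxs_set[OF a] .
    have Ss: "{j. j < length s \<and> s ! j = j} = {..<maxs s}" using maxs_set[OF as] .
    have snt: "\<And>x. x \<le> p \<Longrightarrow> s ! x = t ! x" using p unfolding s_def by (simp add: dup_nth)
    have "maxs t \<notin> {j. j < length t \<and> t ! j = j}" using St by simp
    then have "t ! maxs t \<noteq> maxs t" using ml by simp
    then have "maxs t \<notin> {j. j < length s \<and> s ! j = j}" using snt mp by simp
    then have "maxs s \<le> maxs t" using Ss by (simp add: not_less)
    show ?thesis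
    proof (rule set_eqI)
      fix x
      show "x \<in> {j. j < length s \<and> s ! j = j} \<longleftrightarrow> x \<in> {j. j < length t \<and> t ! j = j}"
      proof
        assume "x \<in> {j. j < length s \<and> s ! j = j}"
        then have x: "x < maxs s" "s ! x = x" using Ss by auto
        then have "x < maxs t" using \<open>maxs s \<le> maxs t\<close> by simp
        then show "x \<in> {j. j < length t \<and> t ! j = j}" using x snt mp ml by simp
      next
        assume "x \<in> {j. j < length t \<and> t ! j = j}"
        then have x: "x < maxs t" "t ! x = x" using St by auto
        then show "x \<in> {j. j < length s \<and> s ! j = j}" using x snt mp ml ls by simp
      qed
    qed
  qed
  have mx: "maxs s = maxs t" unfolding maxs_def using Sst by simp
  have ea: "ealm s = ealm t"
    unfolding ealm_def using mx ml ls mp p by (simp add: s_def dup_nth)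
  have ac: "asc s = asc t" using asc_dup[OF p] s_def by simp
  have ze: "zero s = zero t + (if i = 0 then 1 else 0)"
  proof -
    have "zero s = zero t + (if t ! p = 0 then 1 else 0)"
      unfolding zero_def using count_dup[OF p, of 0] s_def by simp
    moreover have "t ! p = 0 \<longleftrightarrow> i = 0" using Rmin_zero_iff[OF a ir] p_def by (simp add: Rmin_def)
    ultimately show ?thesis by simp
  qed
  have re: "rep s = rep t + 1"
    unfolding rep_def using set_dup[OF p] ls card_length[of t] s_def by simp
  show ?thesis using as snid ls rm rps Ps sb ac mx ea ze re unfolding s_def p_def by simp
qed

definition del :: "nat \<Rightarrow> nat list \<Rightarrow> nat list" where
  "del q s = take q s @ drop (Suc q) s"

lemma del_dup: "p < length t \<Longrightarrow> del (Suc p) (dup p t) = t"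
  by (simp add: del_def dup_def)

lemma del_nth: "q < length s \<Longrightarrow> k < length s - 1 \<Longrightarrow>
   del q s ! k = (if k < q then s ! k else s ! (Suc k))"
  by (auto simp: del_def nth_append min_def nth_drop)

lemma del_len: "q < length s \<Longrightarrow> length (del q s) = length s - 1"
  by (simp add: del_def)

lemma F:
  assumes sT: "s \<in> T2"
  shows "\<exists>t i. is_ascent t \<and> t \<noteq> [0..<length t] \<and> rpos t \<le> i \<and> i < rmin t
             \<and> s = dup (Prm t i) t"
proof -
  have as: "is_ascent s" and snid: "s \<noteq> [0..<length s]" and lr: "length s \<noteq> rmin s + 1"
    and sb: "sebr s = 0" using sT unfolding T2_def Astar_def by auto
  have exs: "\<exists>m. rpos_cond s m" using cond_exists[OF as snid] .
  have rps: "rpos_cond s (rpos s) \<and> (\<forall>m. rpos_cond s m \<longrightarrow> m \<le> rpos s)"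
    using rpos_props[OF as snid exs] .
  define r where "r = rpos s"
  have cr: "rpos_cond s r" using rps r_def by simp
  have rr: "r < rmin s" using cr unfolding rpos_cond_def by simp
  define q where "q = Prm s r"
  have qR: "q \<in> rmin_set s" using Prm_in[OF rr] q_def by simp
  have ql: "q < length s" using Prm_len[OF rr] q_def by simp
  define Oc where "Oc = {j. j < length s \<and> s ! j = s ! q}"
  have finO: "finite Oc" unfolding Oc_def by simp
  have qO: "q \<in> Oc" using ql Oc_def by simp
  have Ole: "\<And>x. x \<in> Oc \<Longrightarrow> x \<le> q"
  proof (rule ccontr)
    fix x assume x: "x \<in> Oc" "\<not> x \<le> q"
    then have "q < x" "x < length s" "s ! x = s ! q" unfolding Oc_def by auto
    then have "s ! q < s ! x" using qR unfolding rmin_set_def by blast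
    then show False using \<open>s ! x = s ! q\<close> by simp
  qed
  obtain j where j: "j < q" "s ! j = Rmin s r" "0 < r \<longrightarrow> Prm s (r - 1) < j"
    using cond_j[OF cr] q_def by blast
  have jO: "j \<in> Oc" using j ql unfolding Oc_def Rmin_def q_def by simp
  define c where "c = card Oc"
  have c2: "2 \<le> c" using two_le_card[OF finO jO qO] j c_def by simp
  define occ where "occ = sorted_list_of_set Oc"
  have lenocc: "length occ = c" using occ_def c_def by simp
  have e1: "{x \<in> Oc. x < q} = Oc - {q}" using Ole by fastforce
  have occ1: "occ ! (c - 1) = q"
    using sl_nth_card[OF finO qO] e1 qO finO unfolding occ_def c_def by (simp add: card_Diff_singleton)
  define p' where "p' = occ ! (c - 2)"
  have p'O: "p' \<in> Oc" using sl_in[OF finO, of "c - 2"] c2 unfolding p'_def occ_def c_def by simp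
  have p'q: "p' < q" using sl_mono[OF finO, of "c - 2" "c - 1"] c2 occ1 unfolding p'_def occ_def c_def by simp
  have betw: "\<And>x. x \<in> Oc \<Longrightarrow> p' < x \<Longrightarrow> x < q \<Longrightarrow> False"
  proof -
    fix x assume x: "x \<in> Oc" "p' < x" "x < q"
    then have "x \<in> set occ" using finO occ_def by simp
    then obtain k where k: "k < c" "occ ! k = x" using lenocc by (metis in_set_conv_nth)
    show False
    proof (cases "k = c - 1")
      case True then show False using k occ1 x by simp
    next
      case False
      then have "k \<le> c - 2" using k by simp
      then have "x \<le> p'"
      proof (cases "k = c - 2")
        case False
        then have "k < c - 2" using \<open>k \<le> c - 2\<close> by simp
        then show ?thesis using sl_mono[OF finO, of k "c - 2"] k c2 unfolding p'_def occ_def c_def by simp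
      qed (use k p'_def in simp)
      then show False using x by simp
    qed
  qed
  have jp': "j \<le> p'" using betw[OF jO] j by fastforce
  have v: "Rmin s (rpos s) = s ! q" using r_def q_def Rmin_def by simp
  have sebr_eq: "sebr s = (if q = Suc p' then 0 else Min {s ! y | y. p' < y \<and> y < q})"
    unfolding sebr_def Let_def v unfolding Oc_def[symmetric] occ_def[symmetric] c_def[symmetric]
    using lenocc occ1 c2 p'_def by simp
  have qp: "q = Suc p'"
  proof (rule ccontr)
    assume nq: "q \<noteq> Suc p'"
    then have m0: "Min {s ! y | y. p' < y \<and> y < q} = 0" using sebr_eq sb by simp
    have Meq: "{s ! y | y. p' < y \<and> y < q} = (\<lambda>y. s ! y) ` {p'<..<q}" by auto
    have "Suc p' < q" using nq p'q by simp
    then have ne: "{s ! y | y. p' < y \<and> y < q} \<noteq> {}" by auto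
    have "finite {s ! y | y. p' < y \<and> y < q}" unfolding Meq by simp
    then have "0 \<in> {s ! y | y. p' < y \<and> y < q}" using Min_in[OF _ ne] m0 by metis
    then obtain y where y: "p' < y" "y < q" "s ! y = 0" by auto
    show False
    proof (cases "r = 0")
      case True
      have "s ! q = 0" using last_zero[OF as] True q_def unfolding Rmin_def by simp
      then have "y \<in> Oc" using y ql unfolding Oc_def by simp
      then show False using betw y by blast
    next
      case False
      have r1: "r - 1 < rmin s" using rr by simp
      have "Prm s (r - 1) < y" using j False jp' y by simp
      then have "s ! Prm s (r - 1) < s ! y" using Prm_in[OF r1] y ql unfolding rmin_set_def by auto
      then show False using y by simp
    qed
  qed
  define t where "t = del q s"
  have lt: "length t = length s - 1" using del_len[OF ql] t_def by simp
  have p'l: "p' < length t" using lt p'q ql by simp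
  have sdup: "s = dup p' t"
  proof (rule nth_equalityI)
    show "length s = length (dup p' t)" using dup_len[OF p'l] lt ql by simp
    fix k assume k: "k < length s"
    have kt: "k \<le> length t" using k lt by simp
    show "s ! k = dup p' t ! k"
    proof (cases "k \<le> p'")
      case True
      then show ?thesis using dup_nth[OF p'l kt] del_nth[OF ql, of k] p'q p'l lt unfolding t_def by simp
    next
      case False
      then have dk: "dup p' t ! k = t ! (k - 1)" using dup_nth[OF p'l kt] by simp
      have k1: "k - 1 < length s - 1" using k False by simp
      show ?thesis
      proof (cases "k = q")
        case True
        then have "t ! (k - 1) = s ! p'" using del_nth[OF ql k1] qp unfolding t_def by simp
        moreover have "s ! p' = s ! q" using p'O Oc_def by simp
        ultimately show ?thesis using dk True by simp
      next
        case F2: False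
        then have "q < k" using False qp by simp
        then have "\<not> k - 1 < q" "Suc (k - 1) = k" by auto
        then have "t ! (k - 1) = s ! k" using del_nth[OF ql k1] unfolding t_def by simp
        then show ?thesis using dk by simp
      qed
    qed
  qed
  have at: "is_ascent t" using is_ascent_dup[OF p'l] as sdup by simp
  have rmst: "rmin s = rmin t" using rmin_dup[OF p'l] sdup by simp
  have tnid: "t \<noteq> [0..<length t]"
  proof
    assume "t = [0..<length t]"
    then have "rmin t = length t" using rmin_id by metis
    then show False using lr rmst lt ql by simp
  qed
  have p'R: "p' \<in> rmin_set t"
  proof -
    have "hh p' p' \<in> hh p' ` rmin_set t" using qR rmin_set_dup[OF p'l] sdup qp by (simp add: hh_def)
    then show ?thesis using inj_hh by (simp add: inj_image_mem_iff)
  qed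
  define i where "i = card {x \<in> rmin_set t. x < p'}"
  have Pi: "Prm t i = p'" using Prm_of[OF p'R] i_def by simp
  have ir: "i < rmin t" using Prm_of_lt[OF p'R] i_def by simp
  have sdup2: "s = dup (Prm t i) t" using sdup Pi by simp
  have ri_eq: "r = i"
  proof -
    have "Prm s i = hh p' (Prm t i)" using Prm_dup[OF p'l ir] sdup by simp
    then have "Prm s i = q" using Pi qp by (simp add: hh_def)
    then show ?thesis using Prm_inj[of i s r] ir rr rmst q_def by simp
  qed
  have ri: "rpos t \<le> i"
  proof (rule ccontr)
    assume "\<not> rpos t \<le> i"
    then have im: "i < rpos t" by simp
    have ext: "\<exists>m. rpos_cond t m" using cond_exists[OF at tnid] .
    have ct: "rpos_cond t (rpos t)" using rpos_props[OF at tnid ext] by simp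
    then have mr: "rpos t < rmin t" unfolding rpos_cond_def by simp
    have "rpos_cond s (rpos t)" using cond_dup_gt[OF im mr] ct sdup2 by simp
    then have "rpos t \<le> r" using rps r_def by simp
    then show False using im ri_eq by simp
  qed
  show ?thesis using at tnid ri ir sdup2 by blast
qed

theorem mainTheorem9:
  fixes n :: nat
  shows "\<exists>f :: nat list \<Rightarrow> nat \<times> nat list.
    bij_betw f (T2 \<inter> A n)
      {(i, t). t \<in> Astar \<and> t \<in> A (n - 1) \<and> rpos t \<le> i \<and> i < rmin t} \<and>
    (\<forall>s \<in> T2 \<inter> A n. fst (f s) = rpos s \<and>
       asc s = asc (snd (f s)) \<and> maxs s = maxs (snd (f s)) \<and>
       ealm s = ealm (snd (f s)) \<and> rmin s = rmin (snd (f s)) \<and>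
       zero s = zero (snd (f s)) + (if rpos s = 0 then 1 else 0) \<and>
       rep s = rep (snd (f s)) + 1)"
proof -
  define f where "f = (\<lambda>s::nat list. (rpos s, del (Prm s (rpos s)) s))"
  define g where "g = (\<lambda>(i::nat, t::nat list). dup (Prm t i) t)"
  let ?A = "T2 \<inter> A n"
  let ?B = "{(i, t). t \<in> Astar \<and> t \<in> A (n - 1) \<and> rpos t \<le> i \<and> i < rmin t}"
  have key: "\<exists>t i. is_ascent t \<and> t \<noteq> [0..<length t] \<and> rpos t \<le> i \<and> i < rmin t
      \<and> s = dup (Prm t i) t \<and> f s = (i, t)" if sA: "s \<in> ?A" for s
  proof -
    obtain t i where ti: "is_ascent t" "t \<noteq> [0..<length t]" "rpos t \<le> i" "i < rmin t"
      "s = dup (Prm t i) t" using F sA by blast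
    note Gt = G[OF ti(1-4)]
    have p: "Prm t i < length t" using Prm_len ti(4) by simp
    have "f s = (i, t)" unfolding f_def using Gt ti(5) del_dup[OF p] by simp
    then show ?thesis using ti by blast
  qed
  have left: "\<forall>s \<in> ?A. g (f s) = s"
  proof
    fix s assume "s \<in> ?A"
    then obtain t i where "s = dup (Prm t i) t" "f s = (i, t)" using key by blast
    then show "g (f s) = s" unfolding g_def by simp
  qed
  have fA: "f ` ?A \<subseteq> ?B"
  proof
    fix x assume "x \<in> f ` ?A"
    then obtain s where sA: "s \<in> ?A" and x: "x = f s" by blast
    then obtain t i where ti: "is_ascent t" "t \<noteq> [0..<length t]" "rpos t \<le> i" "i < rmin t"
      "s = dup (Prm t i) t" "f s = (i, t)" using key by blast
    have "length s = n" using sA unfolding A_def by simp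
    moreover have "length s = Suc (length t)" using G[OF ti(1-4)] ti(5) by simp
    ultimately have "length t = n - 1" by simp
    then show "x \<in> ?B" using ti x unfolding Astar_def A_def by simp
  qed
  have gB: "g (i, t) \<in> ?A \<and> f (g (i, t)) = (i, t)" if iB: "(i, t) \<in> ?B" for i t
  proof -
    have ta: "is_ascent t" and tnid: "t \<noteq> [0..<length t]" and lt: "length t = n - 1"
      and ri: "rpos t \<le> i" and ir: "i < rmin t"
      using iB unfolding Astar_def A_def by auto
    note Gt = G[OF ta tnid ri ir]
    have p: "Prm t i < length t" using Prm_len ir by simp
    have "rmin t \<noteq> length t" using identity[OF ta] tnid by metis
    moreover have "t \<noteq> []" using asc0[OF ta] by simp
    moreover have "Suc (length t) = n" using lt \<open>t \<noteq> []\<close> by (cases n) auto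
    ultimately have "g (i, t) \<in> ?A" using Gt unfolding g_def T2_def Astar_def A_def by auto
    moreover have "f (g (i, t)) = (i, t)" unfolding f_def g_def using Gt del_dup[OF p] by simp
    ultimately show ?thesis by simp
  qed
  have right: "\<forall>x \<in> ?B. f (g x) = x" using gB by auto
  have gBA: "g ` ?B \<subseteq> ?A" using gB by auto
  have bij: "bij_betw f ?A ?B" by (rule bij_betw_byWitness[OF left right fA gBA])
  have stats: "\<forall>s \<in> ?A. fst (f s) = rpos s \<and>
       asc s = asc (snd (f s)) \<and> maxs s = maxs (snd (f s)) \<and>
       ealm s = ealm (snd (f s)) \<and> rmin s = rmin (snd (f s)) \<and>
       zero s = zero (snd (f s)) + (if rpos s = 0 then 1 else 0) \<and>
       rep s = rep (snd (f s)) + 1"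
  proof
    fix s assume sA: "s \<in> ?A"
    then obtain t i where ti: "is_ascent t" "t \<noteq> [0..<length t]" "rpos t \<le> i" "i < rmin t"
      "s = dup (Prm t i) t" "f s = (i, t)" using key by blast
    note Gt = G[OF ti(1-4)]
    show "fst (f s) = rpos s \<and>
       asc s = asc (snd (f s)) \<and> maxs s = maxs (snd (f s)) \<and>
       ealm s = ealm (snd (f s)) \<and> rmin s = rmin (snd (f s)) \<and>
       zero s = zero (snd (f s)) + (if rpos s = 0 then 1 else 0) \<and>
       rep s = rep (snd (f s)) + 1"
      using Gt ti(5,6) unfolding f_def by simp
  qed
  show ?thesis using bij stats by blast
qed

end
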